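(* If $H(P)\ge\sum_{i=1}^N\pi_i\frac{\beta_i^2}{2}$, then $\underline\zeta=0$. Otherwise, $\underline\zeta$ equals the optimal value of the convex optimization problem $$\text{minimize}_{\theta\in\Delta}\quad -\sum_{(i,j)\in E}\theta_{ij}\log P_{ij}+R(\theta)-2\sqrt{R(\theta)}\sqrt{H(\theta)},\qquad R(\theta):=\sum_{i=1}^N\overline\theta_i\frac{\beta_i^2}{2};$$ in particular, the objective of this problem is a convex function on the convex set $\Delta$.
   Context: $V=\{1,\dots,N\}$; $P$ row-stochastic irreducible aperiodic with stationary distribution $\pi>0$; $E=\{(i,j):P_{ij}>0\}$; $\beta\in\mathbb R^N$. $\Delta=\{\theta\in\mathbb R^{N\times N}:\theta_{ij}\ge0,\sum_{i,j}\theta_{ij}=1,\sum_j\theta_{ij}=\sum_j\theta_{ji}\forall i,\theta_{ij}=0\text{ if }(i,j)\notin E\}$, $\overline\theta=\theta\mathbf1$. $H(\theta)=-\sum\theta_{ij}\log(\theta_{ij}/\overline\theta_i)$, $D(\theta\|P)=\sum\theta_{ij}\log(\theta_{ij}/(\overline\theta_iP_{ij}))$ ($0\log0=0$). $H(P):=-\sum_{i,j}\pi_iP_{ij}\log P_{ij}$ (i.e., $H$ evaluated at $\theta_{ij}=\pi_iP_{ij}$). $J_\theta(\xi)=\sum_{i:\overline\theta_i>0}\xi_i^2/(2\overline\theta_i)$ if $\xi_i=0$ whenever $\overline\theta_i=0$, else $+\infty$. $\underline\zeta$ is the infimum of $D(\theta\|P)+\sum_{i:\overline\theta_i>0}\overline\theta_i(\beta_i-\xi_i/\overline\theta_i)^2/2$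 over $\theta\in\Delta$, $\xi\in\mathbb R^N$ subject to $H(\theta)\ge J_\theta(\xi)$. *)

theory Defs
  imports "HOL-Analysis.Analysis"
begin

text \<open>States are the elements of a finite type 'n (so N = CARD('n)); matrices are real^'n^'n.\<close>

fun mpow :: "real^'n^'n \<Rightarrow> nat \<Rightarrow> real^'n^'n" where
  "mpow P 0 = mat 1"
| "mpow P (Suc k) = P ** mpow P k"

definition row_stochastic :: "real^'n::finite^'n \<Rightarrow> bool" where
  "row_stochastic P \<longleftrightarrow> (\<forall>i j. P$i$j \<ge> 0) \<and> (\<forall>i. (\<Sum>j\<in>UNIV. P$i$j) = 1)"

definition irreducible_chain :: "real^'n::finite^'n \<Rightarrow> bool" where
  "irreducible_chain P \<longleftrightarrow> (\<forall>i j. \<exists>k>0. mpow P k $i$j > 0)"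

definition aperiodic_chain :: "real^'n::finite^'n \<Rightarrow> bool" where
  "aperiodic_chain P \<longleftrightarrow> (\<forall>i. Gcd {k. k > 0 \<and> mpow P k $i$i > 0} = 1)"

definition stationary :: "real^'n::finite^'n \<Rightarrow> real^'n \<Rightarrow> bool" where
  "stationary P \<pi> \<longleftrightarrow> (\<forall>i. \<pi>$i \<ge> 0) \<and> (\<Sum>i\<in>UNIV. \<pi>$i) = 1 \<and>
     (\<forall>j. (\<Sum>i\<in>UNIV. \<pi>$i * P$i$j) = \<pi>$j)"

definition Delta :: "real^'n::finite^'n \<Rightarrow> (real^'n^'n) set" where
  "Delta P = {\<theta>. (\<forall>i j. \<theta>$i$j \<ge> 0) \<and> (\<Sum>i\<in>UNIV. \<Sum>j\<in>UNIV. \<theta>$i$j) = 1 \<and>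
      (\<forall>i. (\<Sum>j\<in>UNIV. \<theta>$i$j) = (\<Sum>j\<in>UNIV. \<theta>$j$i)) \<and>
      (\<forall>i j. P$i$j \<le> 0 \<longrightarrow> \<theta>$i$j = 0)}"

definition tbar :: "real^'n::finite^'n \<Rightarrow> real^'n" where
  "tbar \<theta> = (\<chi> i. \<Sum>j\<in>UNIV. \<theta>$i$j)"

definition xlog :: "real \<Rightarrow> real \<Rightarrow> real" where
  "xlog x y = (if x = 0 then 0 else x * ln (x / y))"

definition Hent :: "real^'n::finite^'n \<Rightarrow> real" where
  "Hent \<theta> = - (\<Sum>i\<in>UNIV. \<Sum>j\<in>UNIV. xlog (\<theta>$i$j) (tbar \<theta> $ i))"

definition KL :: "real^'n::finite^'n \<Rightarrow> real^'n^'n \<Rightarrow> real" where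
  "KL \<theta> P = (\<Sum>i\<in>UNIV. \<Sum>j\<in>UNIV. xlog (\<theta>$i$j) (tbar \<theta> $ i * P$i$j))"

definition HP :: "real^'n::finite^'n \<Rightarrow> real^'n \<Rightarrow> real" where
  "HP P \<pi> = Hent (\<chi> i j. \<pi>$i * P$i$j)"

definition Jfun :: "real^'n::finite^'n \<Rightarrow> real^'n \<Rightarrow> ereal" where
  "Jfun \<theta> \<xi> = (if (\<forall>i. tbar \<theta> $ i = 0 \<longrightarrow> \<xi>$i = 0)
     then ereal (\<Sum>i\<in>{i. tbar \<theta> $ i > 0}. (\<xi>$i)\<^sup>2 / (2 * tbar \<theta> $ i))
     else \<infinity>)"

definition zeta_low :: "real^'n::finite^'n \<Rightarrow> real^'n \<Rightarrow> real" where
  "zeta_low P \<beta> = Inf {KL \<theta> P + (\<Sum>i\<in>{i. tbar \<theta> $ i > 0}.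
        tbar \<theta> $ i * (\<beta>$i - \<xi>$i / tbar \<theta> $ i)\<^sup>2 / 2)
      | \<theta> \<xi>. \<theta> \<in> Delta P \<and> Jfun \<theta> \<xi> \<le> ereal (Hent \<theta>)}"

definition Rfun :: "real^'n \<Rightarrow> real^'n::finite^'n \<Rightarrow> real" where
  "Rfun \<beta> \<theta> = (\<Sum>i\<in>UNIV. tbar \<theta> $ i * (\<beta>$i)\<^sup>2 / 2)"

definition obj :: "real^'n::finite^'n \<Rightarrow> real^'n \<Rightarrow> real^'n^'n \<Rightarrow> real" where
  "obj P \<beta> \<theta> = - (\<Sum>i\<in>UNIV. \<Sum>j\<in>{j. P$i$j > 0}. \<theta>$i$j * ln (P$i$j))
     + Rfun \<beta> \<theta> - 2 * sqrt (Rfun \<beta> \<theta>) * sqrt (Hent \<theta>)"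

end

theory Submission
  imports Defs
begin



lemma xlog_tangent:
  assumes "a \<ge> 0" "b \<ge> 0" "a > 0 \<longrightarrow> b > 0" "r > 0"
  shows "xlog a b \<ge> a * ln r + a - b * r"
proof (cases "a = 0")
  case True thus ?thesis using assms by (simp add: xlog_def)
next
  case False
  hence a: "a > 0" and b: "b > 0" using assms by auto
  have "ln (b * r / a) \<le> b * r / a - 1" using a b assms(4) by (intro ln_le_minus_one) auto
  hence "a * ln (b * r / a) \<le> a * (b * r / a - 1)" using a by (simp add: mult_left_mono)
  also have "\<dots> = b * r - a" using a by (simp add: field_simps)
  finally have 1: "a * ln (b * r / a) \<le> b * r - a" .
  have "ln (b * r / a) = ln r - ln (a / b)" using a b assms(4)
    by (simp add: ln_div ln_mult)
  with 1 have "a * ln r - a * ln (a/b) \<le> b * r - a" by (simp add: algebra_simps)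
  thus ?thesis using False by (simp add: xlog_def)
qed

lemma xlog_sum2:
  assumes "a1 \<ge> 0" "b1 \<ge> 0" "a1 > 0 \<longrightarrow> b1 > 0" "a2 \<ge> 0" "b2 \<ge> 0" "a2 > 0 \<longrightarrow> b2 > 0"
  shows "xlog (a1 + a2) (b1 + b2) \<le> xlog a1 b1 + xlog a2 b2"
proof (cases "a1 + a2 = 0")
  case True
  hence "a1 = 0" "a2 = 0" using assms by auto
  thus ?thesis by (simp add: xlog_def)
next
  case False
  hence A: "a1 + a2 > 0" using assms by auto
  have B: "b1 + b2 > 0" using assms A by (cases "a1 > 0") auto
  define r where "r = (a1 + a2) / (b1 + b2)"
  have r: "r > 0" using A B by (simp add: r_def)
  have "xlog a1 b1 + xlog a2 b2 \<ge> (a1 * ln r + a1 - b1 * r) + (a2 * ln r + a2 - b2 * r)"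
    using xlog_tangent[OF assms(1-3) r] xlog_tangent[OF assms(4-6) r] by linarith
  also have "(a1 * ln r + a1 - b1 * r) + (a2 * ln r + a2 - b2 * r) = (a1 + a2) * ln r"
  proof -
    have "b1 * r + b2 * r = (b1 + b2) * r" by (simp add: algebra_simps)
    also have "\<dots> = a1 + a2" using B by (simp add: r_def)
    finally have "b1 * r + b2 * r = a1 + a2" .
    thus ?thesis by (simp add: algebra_simps)
  qed
  also have "\<dots> = xlog (a1 + a2) (b1 + b2)" using False by (simp add: xlog_def r_def)
  finally show ?thesis .
qed

lemma xlog_scale: "t \<ge> 0 \<Longrightarrow> xlog (t * a) (t * b) = t * xlog a b"
  by (cases "t = 0") (auto simp: xlog_def)

lemma xlog_convex:
  assumes "a1 \<ge> 0" "b1 \<ge> 0" "a1 > 0 \<longrightarrow> b1 > 0" "a2 \<ge> 0" "b2 \<ge> 0" "a2 > 0 \<longrightarrow> b2 > 0"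
    and "u \<ge> 0" "v \<ge> 0"
  shows "xlog (u * a1 + v * a2) (u * b1 + v * b2) \<le> u * xlog a1 b1 + v * xlog a2 b2"
proof -
  have "xlog (u * a1 + v * a2) (u * b1 + v * b2) \<le> xlog (u * a1) (u * b1) + xlog (v * a2) (v * b2)"
    using assms by (intro xlog_sum2) (auto simp: zero_less_mult_iff)
  thus ?thesis using assms by (simp add: xlog_scale)
qed

lemma xlog_ge: "a \<ge> 0 \<Longrightarrow> b \<ge> 0 \<Longrightarrow> (a > 0 \<longrightarrow> b > 0) \<Longrightarrow> xlog a b \<ge> a - b"
  using xlog_tangent[of a b 1] by simp

lemma xlog_le0: "0 \<le> a \<Longrightarrow> a \<le> b \<Longrightarrow> xlog a b \<le> 0"
  by (auto simp: xlog_def mult_nonneg_nonpos ln_le_zero_iff divide_le_eq_1)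




lemma comb_nth[simp]: "(u *\<^sub>R x + v *\<^sub>R y) $ i $ j = u * x$i$j + v * (y::real^'n^'m)$i$j"
  by simp

lemma tbar_comb: "tbar (u *\<^sub>R x + v *\<^sub>R y) $ i = u * tbar x $ i + v * tbar (y::real^'n::finite^'n) $ i"
  by (simp add: tbar_def sum.distrib sum_distrib_left)

lemma tbar_nth: "tbar x $ i = (\<Sum>j\<in>UNIV. x$i$j)" by (simp add: tbar_def)

lemma Delta_facts:
  assumes "\<theta> \<in> Delta P"
  shows "\<theta>$i$j \<ge> 0" "\<theta>$i$j \<le> tbar \<theta> $ i" "tbar \<theta> $ i \<ge> 0" "P$i$j \<le> 0 \<Longrightarrow> \<theta>$i$j = 0"
    "\<theta>$i$j > 0 \<Longrightarrow> tbar \<theta> $ i > 0" "\<theta>$i$j > 0 \<Longrightarrow> P$i$j > 0"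
proof -
  show 1: "\<theta>$i$j \<ge> 0" using assms by (simp add: Delta_def)
  show 2: "\<theta>$i$j \<le> tbar \<theta> $ i" unfolding tbar_nth
    using assms by (intro member_le_sum) (auto simp: Delta_def)
  show "tbar \<theta> $ i \<ge> 0" unfolding tbar_nth using assms by (intro sum_nonneg) (auto simp: Delta_def)
  show 4: "P$i$j \<le> 0 \<Longrightarrow> \<theta>$i$j = 0" using assms by (simp add: Delta_def)
  show "\<theta>$i$j > 0 \<Longrightarrow> tbar \<theta> $ i > 0" using 2 by linarith
  show "\<theta>$i$j > 0 \<Longrightarrow> P$i$j > 0" using 4 by force
qed

lemma convex_Delta: "convex (Delta (P::real^'n::finite^'n))"
proof (rule convexI)
  fix x y :: "real^'n^'n" and u v :: real
  assume x: "x \<in> Delta P" and y: "y \<in> Delta P" and uv: "0 \<le> u" "0 \<le> v" "u + v = 1"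
  have s: "(\<Sum>i\<in>UNIV. \<Sum>j\<in>UNIV. (u *\<^sub>R x + v *\<^sub>R y)$i$j)
     = u * (\<Sum>i\<in>UNIV. \<Sum>j\<in>UNIV. x$i$j) + v * (\<Sum>i\<in>UNIV. \<Sum>j\<in>UNIV. y$i$j)"
    by (simp add: sum.distrib sum_distrib_left)
  have b: "(\<Sum>j\<in>UNIV. (u *\<^sub>R x + v *\<^sub>R y)$i$j) = (\<Sum>j\<in>UNIV. (u *\<^sub>R x + v *\<^sub>R y)$j$i)" for i
  proof -
    have "(\<Sum>j\<in>UNIV. (u *\<^sub>R x + v *\<^sub>R y)$i$j) = u * (\<Sum>j\<in>UNIV. x$i$j) + v * (\<Sum>j\<in>UNIV. y$i$j)"
      by (simp add: sum.distrib sum_distrib_left)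
    also have "\<dots> = u * (\<Sum>j\<in>UNIV. x$j$i) + v * (\<Sum>j\<in>UNIV. y$j$i)"
      using x y by (simp add: Delta_def)
    also have "\<dots> = (\<Sum>j\<in>UNIV. (u *\<^sub>R x + v *\<^sub>R y)$j$i)"
      by (simp add: sum.distrib sum_distrib_left)
    finally show ?thesis .
  qed
  show "u *\<^sub>R x + v *\<^sub>R y \<in> Delta P"
    using x y uv s b unfolding Delta_def by auto
qed

lemma sum2_comb_le:
  fixes f g h :: "'a \<Rightarrow> 'b \<Rightarrow> real"
  assumes "\<And>i j. f i j \<le> u * g i j + v * h i j"
  shows "(\<Sum>i\<in>A. \<Sum>j\<in>B. f i j) \<le> u * (\<Sum>i\<in>A. \<Sum>j\<in>B. g i j) + v * (\<Sum>i\<in>A. \<Sum>j\<in>B. h i j)"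
proof -
  have "(\<Sum>i\<in>A. \<Sum>j\<in>B. f i j) \<le> (\<Sum>i\<in>A. \<Sum>j\<in>B. u * g i j + v * h i j)"
    by (rule sum_mono, rule sum_mono, rule assms)
  also have "\<dots> = u * (\<Sum>i\<in>A. \<Sum>j\<in>B. g i j) + v * (\<Sum>i\<in>A. \<Sum>j\<in>B. h i j)"
    by (simp add: sum.distrib sum_distrib_left)
  finally show ?thesis .
qed

lemma KL_convex:
  assumes x: "x \<in> Delta P" and y: "y \<in> Delta P" and uv: "0 \<le> u" "0 \<le> v"
  shows "KL (u *\<^sub>R x + v *\<^sub>R y) P \<le> u * KL x P + v * KL y P"
  unfolding KL_def
proof (rule sum2_comb_le)
  fix i j
  show "xlog ((u *\<^sub>R x + v *\<^sub>R y) $ i $ j) (tbar (u *\<^sub>R x + v *\<^sub>R y) $ i * P $ i $ j)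
         \<le> u * xlog (x $ i $ j) (tbar x $ i * P $ i $ j) + v * xlog (y $ i $ j) (tbar y $ i * P $ i $ j)"
  proof (cases "P$i$j > 0")
    case False
    hence "x$i$j = 0" "y$i$j = 0" using Delta_facts(4)[OF x] Delta_facts(4)[OF y] by auto
    thus ?thesis by (simp add: xlog_def)
  next
    case True
    have e: "tbar (u *\<^sub>R x + v *\<^sub>R y) $ i * P $ i $ j = u * (tbar x $ i * P $ i $ j) + v * (tbar y $ i * P $ i $ j)"
      by (simp add: tbar_comb algebra_simps)
    show ?thesis unfolding e comb_nth
      using True Delta_facts[OF x] Delta_facts[OF y] uv
      by (intro xlog_convex) auto
  qed
qed

lemma Hent_concave:
  assumes x: "x \<in> Delta P" and y: "y \<in> Delta P" and uv: "0 \<le> u" "0 \<le> v"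
  shows "Hent (u *\<^sub>R x + v *\<^sub>R y) \<ge> u * Hent x + v * Hent y"
proof -
  have "(\<Sum>i\<in>UNIV. \<Sum>j\<in>UNIV. xlog ((u *\<^sub>R x + v *\<^sub>R y)$i$j) (tbar (u *\<^sub>R x + v *\<^sub>R y) $ i))
     \<le> u * (\<Sum>i\<in>UNIV. \<Sum>j\<in>UNIV. xlog (x$i$j) (tbar x $ i)) + v * (\<Sum>i\<in>UNIV. \<Sum>j\<in>UNIV. xlog (y$i$j) (tbar y $ i))"
  proof (rule sum2_comb_le)
    fix i j
    show "xlog ((u *\<^sub>R x + v *\<^sub>R y)$i$j) (tbar (u *\<^sub>R x + v *\<^sub>R y) $ i)
      \<le> u * xlog (x$i$j) (tbar x $ i) + v * xlog (y$i$j) (tbar y $ i)"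
      unfolding tbar_comb comb_nth
      using Delta_facts[OF x] Delta_facts[OF y] uv
      by (intro xlog_convex) auto
  qed
  thus ?thesis unfolding Hent_def by simp
qed

lemma Hent_nonneg: "x \<in> Delta P \<Longrightarrow> Hent x \<ge> 0"
proof -
  assume x: "x \<in> Delta P"
  have "(\<Sum>i\<in>UNIV. \<Sum>j\<in>UNIV. xlog (x$i$j) (tbar x $ i)) \<le> 0"
    using Delta_facts[OF x] by (intro sum_nonpos xlog_le0) auto
  thus ?thesis unfolding Hent_def by simp
qed

lemma Rfun_comb: "Rfun \<beta> (u *\<^sub>R x + v *\<^sub>R y) = u * Rfun \<beta> x + v * Rfun \<beta> y"
proof -
  have "Rfun \<beta> (u *\<^sub>R x + v *\<^sub>R y) = (\<Sum>i\<in>UNIV. u * (tbar x $ i * (\<beta>$i)\<^sup>2 / 2) + v * (tbar y $ i * (\<beta>$i)\<^sup>2 / 2))"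
    unfolding Rfun_def tbar_comb by (intro sum.cong) (auto simp: algebra_simps)
  thus ?thesis by (simp add: Rfun_def sum.distrib sum_distrib_left)
qed

lemma Rfun_nonneg: "x \<in> Delta P \<Longrightarrow> Rfun \<beta> x \<ge> 0"
  unfolding Rfun_def by (intro sum_nonneg divide_nonneg_nonneg mult_nonneg_nonneg) (auto simp: Delta_facts(3))




definition Lfun :: "real^'n::finite^'n \<Rightarrow> real^'n^'n \<Rightarrow> real" where
  "Lfun P \<theta> = (\<Sum>i\<in>UNIV. \<Sum>j\<in>{j. P$i$j > 0}. \<theta>$i$j * ln (P$i$j))"

lemma sum_filter_if: "(\<Sum>j\<in>{j::'a::finite. Q j}. g j) = (\<Sum>j\<in>UNIV. if Q j then g j else (0::real))"
  by (simp add: sum.If_cases)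

lemma Lfun_comb: "Lfun P (u *\<^sub>R x + v *\<^sub>R y) = u * Lfun P x + v * Lfun P y"
  unfolding Lfun_def comb_nth by (simp add: sum.distrib sum_distrib_left algebra_simps)

lemma KL_eq:
  assumes x: "x \<in> Delta P"
  shows "KL x P = - Hent x - Lfun P x"
proof -
  have t: "xlog (x$i$j) (tbar x $ i * P$i$j) = xlog (x$i$j) (tbar x $ i) - (if P$i$j > 0 then x$i$j * ln (P$i$j) else 0)" for i j
  proof (cases "x$i$j = 0")
    case True thus ?thesis by (simp add: xlog_def)
  next
    case False
    hence a: "x$i$j > 0" using Delta_facts(1)[OF x, of i j] by auto
    hence b: "tbar x $ i > 0" "P$i$j > 0" using Delta_facts(5,6)[OF x] by auto
    have h: "ln (x$i$j / (tbar x $ i * P$i$j)) = ln (x$i$j / tbar x $ i) - ln (P$i$j)"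
      using a b by (simp add: ln_div ln_mult)
    have "x$i$j * ln (x$i$j / (tbar x $ i * P$i$j)) = x$i$j * ln (x$i$j / tbar x $ i) - x$i$j * ln (P$i$j)"
      by (simp only: h right_diff_distrib)
    thus ?thesis using False b by (simp add: xlog_def)
  qed
  have "KL x P = (\<Sum>i\<in>UNIV. \<Sum>j\<in>UNIV. xlog (x$i$j) (tbar x $ i)) - (\<Sum>i\<in>UNIV. \<Sum>j\<in>UNIV. (if P$i$j > 0 then x$i$j * ln (P$i$j) else 0))"
    unfolding KL_def t by (simp add: sum_subtractf)
  thus ?thesis unfolding Hent_def Lfun_def sum_filter_if by simp
qed

lemma obj_eq:
  assumes x: "x \<in> Delta P"
  shows "obj P \<beta> x = KL x P + (sqrt (Rfun \<beta> x) - sqrt (Hent x))\<^sup>2"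
proof -
  have R: "Rfun \<beta> x \<ge> 0" and H: "Hent x \<ge> 0" using Rfun_nonneg[OF x] Hent_nonneg[OF x] by auto
  have "(sqrt (Rfun \<beta> x) - sqrt (Hent x))\<^sup>2 = Rfun \<beta> x - 2 * sqrt (Rfun \<beta> x) * sqrt (Hent x) + Hent x"
    using R H by (simp add: power2_eq_square algebra_simps)
  thus ?thesis unfolding obj_def KL_eq[OF x] Lfun_def[symmetric] by simp
qed

lemma KL_nonneg:
  assumes P: "row_stochastic P" and x: "x \<in> Delta P"
  shows "KL x P \<ge> 0"
proof -
  have Pn: "P$i$j \<ge> 0" for i j using P by (simp add: row_stochastic_def)
  have "0 = (\<Sum>i\<in>UNIV. \<Sum>j\<in>UNIV. x$i$j) - (\<Sum>i\<in>UNIV. tbar x $ i * (\<Sum>j\<in>UNIV. P$i$j))"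
    using P x by (simp add: row_stochastic_def Delta_def tbar_def)
  also have "\<dots> = (\<Sum>i\<in>UNIV. \<Sum>j\<in>UNIV. x$i$j - tbar x $ i * P$i$j)"
    by (simp add: sum_subtractf sum_distrib_left)
  also have "\<dots> \<le> KL x P"
    unfolding KL_def
    using Delta_facts[OF x] Pn
    by (intro sum_mono xlog_ge) (auto simp: zero_less_mult_iff)
  finally show ?thesis .
qed

lemma gm_ineq:
  fixes a1 a2 b1 b2 u v :: real
  assumes "u \<ge> 0" "v \<ge> 0"
  shows "u * a1 * b1 + v * a2 * b2 \<le> sqrt (u * a1\<^sup>2 + v * a2\<^sup>2) * sqrt (u * b1\<^sup>2 + v * b2\<^sup>2)"
proof -
  have "(u * a1\<^sup>2 + v * a2\<^sup>2) * (u * b1\<^sup>2 + v * b2\<^sup>2) - (u * a1 * b1 + v * a2 * b2)\<^sup>2 = u * v * (a1 * b2 - a2 * b1)\<^sup>2"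
    by (simp add: power2_eq_square algebra_simps)
  moreover have "u * v * (a1 * b2 - a2 * b1)\<^sup>2 \<ge> 0" using assms by simp
  ultimately have "(u * a1 * b1 + v * a2 * b2)\<^sup>2 \<le> (u * a1\<^sup>2 + v * a2\<^sup>2) * (u * b1\<^sup>2 + v * b2\<^sup>2)" by linarith
  hence "sqrt ((u * a1 * b1 + v * a2 * b2)\<^sup>2) \<le> sqrt ((u * a1\<^sup>2 + v * a2\<^sup>2) * (u * b1\<^sup>2 + v * b2\<^sup>2))"
    by (rule real_sqrt_le_mono)
  thus ?thesis by (simp add: real_sqrt_mult)
qed

lemma obj_convex: "convex_on (Delta (P::real^'n::finite^'n)) (obj P \<beta>)"
  unfolding convex_on_def
proof (intro conjI convex_Delta ballI allI impI)
  fix x y :: "real^'n^'n" and u v :: real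
  assume x: "x \<in> Delta P" and y: "y \<in> Delta P" and u: "0 \<le> u" and v: "0 \<le> v" and uv: "u + v = 1"
  define m where "m = u *\<^sub>R x + v *\<^sub>R y"
  have Rx: "Rfun \<beta> x \<ge> 0" and Ry: "Rfun \<beta> y \<ge> 0" and Hx: "Hent x \<ge> 0" and Hy: "Hent y \<ge> 0"
    using Rfun_nonneg x y Hent_nonneg by auto
  have Rm: "Rfun \<beta> m = u * (sqrt (Rfun \<beta> x))\<^sup>2 + v * (sqrt (Rfun \<beta> y))\<^sup>2"
    using Rx Ry by (simp add: m_def Rfun_comb)
  have Hm: "Hent m \<ge> u * (sqrt (Hent x))\<^sup>2 + v * (sqrt (Hent y))\<^sup>2"
    using Hx Hy Hent_concave[OF x y u v] by (simp add: m_def)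
  have "u * sqrt (Rfun \<beta> x) * sqrt (Hent x) + v * sqrt (Rfun \<beta> y) * sqrt (Hent y)
     \<le> sqrt (Rfun \<beta> m) * sqrt (u * (sqrt (Hent x))\<^sup>2 + v * (sqrt (Hent y))\<^sup>2)"
    unfolding Rm by (rule gm_ineq[OF u v])
  also have "\<dots> \<le> sqrt (Rfun \<beta> m) * sqrt (Hent m)"
    using Hm Rx Ry u v by (intro mult_left_mono real_sqrt_le_mono) (auto simp: Rm)
  finally have g: "u * sqrt (Rfun \<beta> x) * sqrt (Hent x) + v * sqrt (Rfun \<beta> y) * sqrt (Hent y)
     \<le> sqrt (Rfun \<beta> m) * sqrt (Hent m)" .
  have "obj P \<beta> m = - (u * Lfun P x + v * Lfun P y) + (u * Rfun \<beta> x + v * Rfun \<beta> y) - 2 * (sqrt (Rfun \<beta> m) * sqrt (Hent m))"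
    unfolding obj_def Lfun_def[symmetric] by (simp add: m_def Lfun_comb Rfun_comb)
  also have "\<dots> \<le> u * obj P \<beta> x + v * obj P \<beta> y"
    using g unfolding obj_def Lfun_def[symmetric] by (simp add: algebra_simps)
  finally show "obj P \<beta> (u *\<^sub>R x + v *\<^sub>R y) \<le> u * obj P \<beta> x + v * obj P \<beta> y" by (simp add: m_def)
qed




lemma xlog_same[simp]: "xlog a a = 0" by (simp add: xlog_def)

definition tstar :: "real^'n::finite^'n \<Rightarrow> real^'n \<Rightarrow> real^'n^'n" where
  "tstar P \<pi> = (\<chi> i j. \<pi>$i * P$i$j)"

lemma tstar_facts:
  assumes P: "row_stochastic P" and st: "stationary P \<pi>"
  shows "tbar (tstar P \<pi>) = \<pi>" "tstar P \<pi> \<in> Delta P" "KL (tstar P \<pi>) P = 0"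
    "Hent (tstar P \<pi>) = HP P \<pi>" "Rfun \<beta> (tstar P \<pi>) = (\<Sum>i\<in>UNIV. \<pi>$i * (\<beta>$i)\<^sup>2 / 2)"
proof -
  have Pn: "P$i$j \<ge> 0" for i j using P by (simp add: row_stochastic_def)
  have Ps: "(\<Sum>j\<in>UNIV. P$i$j) = 1" for i using P by (simp add: row_stochastic_def)
  have pn: "\<pi>$i \<ge> 0" for i using st by (simp add: stationary_def)
  show tb: "tbar (tstar P \<pi>) = \<pi>"
    by (simp add: vec_eq_iff tbar_def tstar_def flip: sum_distrib_left add: Ps)
  show "tstar P \<pi> \<in> Delta P"
    unfolding Delta_def
  proof (intro CollectI conjI allI impI)
    fix i j show "0 \<le> tstar P \<pi> $ i $ j" using Pn pn by (simp add: tstar_def)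
  next
    show "(\<Sum>i\<in>UNIV. \<Sum>j\<in>UNIV. tstar P \<pi> $ i $ j) = 1"
      using st by (simp add: tstar_def stationary_def flip: sum_distrib_left add: Ps)
  next
    fix i
    show "(\<Sum>j\<in>UNIV. tstar P \<pi> $ i $ j) = (\<Sum>j\<in>UNIV. tstar P \<pi> $ j $ i)"
      using st by (simp add: tstar_def stationary_def flip: sum_distrib_left add: Ps)
  next
    fix i j assume "P$i$j \<le> 0" thus "tstar P \<pi> $ i $ j = 0" using Pn[of i j] by (simp add: tstar_def)
  qed
  show "KL (tstar P \<pi>) P = 0"
    unfolding KL_def tb by (simp add: tstar_def)
  show "Hent (tstar P \<pi>) = HP P \<pi>" by (simp add: HP_def tstar_def)
  show "Rfun \<beta> (tstar P \<pi>) = (\<Sum>i\<in>UNIV. \<pi>$i * (\<beta>$i)\<^sup>2 / 2)" by (simp add: Rfun_def tb)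
qed

lemma cont_xlog:
  assumes "continuous_on S a" "continuous_on S b"
    and "(\<forall>t\<in>S. a t > 0 \<and> b t > 0) \<or> (\<forall>t\<in>S. a t = 0)"
  shows "continuous_on S (\<lambda>t. xlog (a t) (b t))"
  using assms(3)
proof
  assume h: "\<forall>t\<in>S. a t > 0 \<and> b t > 0"
  have "continuous_on S (\<lambda>t. a t * ln (a t / b t))"
    using h assms(1,2) by (intro continuous_intros) auto
  thus ?thesis by (rule continuous_on_cong[THEN iffD1, rotated 2]) (use h in \<open>auto simp: xlog_def\<close>)
next
  assume h: "\<forall>t\<in>S. a t = 0"
  have "continuous_on S (\<lambda>t. 0::real)" by (rule continuous_on_const)
  thus ?thesis by (rule continuous_on_cong[THEN iffD1, rotated 2]) (use h in \<open>auto simp: xlog_def\<close>)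
qed




lemma segment:
  fixes P :: "real^'n::finite^'n"
  assumes P: "row_stochastic P" and st: "stationary P \<pi>" and pos: "\<forall>i. \<pi>$i > 0"
    and hyp: "HP P \<pi> < (\<Sum>i\<in>UNIV. \<pi>$i * (\<beta>$i)\<^sup>2 / 2)"
    and x: "x \<in> Delta P" and lt: "Rfun \<beta> x < Hent x"
  shows "\<exists>y\<in>Delta P. obj P \<beta> y \<le> KL x P"
proof -
  define ts where "ts = tstar P \<pi>"
  have ts: "ts \<in> Delta P" "KL ts P = 0" "tbar ts = \<pi>"
    using tstar_facts[OF P st] by (auto simp: ts_def)
  have Pn: "P$i$j \<ge> 0" for i j using P by (simp add: row_stochastic_def)
  define th where "th t = (1-t) *\<^sub>R ts + t *\<^sub>R x" for t :: real
  define \<phi> where "\<phi> t = Rfun \<beta> (th t) - Hent (th t)" for t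
  have thD: "th t \<in> Delta P" if "0 \<le> t" "t \<le> 1" for t
    using convex_Delta[of P] ts(1) x that unfolding convex_def th_def by auto
  have th0: "th 0 = ts" and th1: "th 1 = x" by (simp_all add: th_def)
  have p0: "\<phi> 0 > 0" using tstar_facts[OF P st] hyp by (simp add: \<phi>_def th0 ts_def)
  have p1: "\<phi> 1 < 0" using lt by (simp add: \<phi>_def th1)
  have ple: "\<phi> t \<le> (1-t) * \<phi> 0 + t * \<phi> 1" if "0 \<le> t" "t \<le> 1" for t
  proof -
    have "Hent (th t) \<ge> (1-t) * Hent ts + t * Hent x"
      unfolding th_def using that by (intro Hent_concave[OF ts(1) x]) auto
    moreover have "Rfun \<beta> (th t) = (1-t) * Rfun \<beta> ts + t * Rfun \<beta> x" by (simp add: th_def Rfun_comb)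
    ultimately show ?thesis unfolding \<phi>_def th0 th1 by (simp add: algebra_simps)
  qed
  define t1 where "t1 = (1 + \<phi> 0 / (\<phi> 0 - \<phi> 1)) / 2"
  have q: "0 < \<phi> 0 / (\<phi> 0 - \<phi> 1)" "\<phi> 0 / (\<phi> 0 - \<phi> 1) < 1" using p0 p1 by (auto simp: field_simps)
  have t1: "0 < t1" "t1 < 1" using q by (auto simp: t1_def)
  have "(1-t1) * \<phi> 0 + t1 * \<phi> 1 < 0"
  proof -
    have "t1 * (\<phi> 0 - \<phi> 1) = ((\<phi> 0 - \<phi> 1) + \<phi> 0) / 2" using p0 p1 by (simp add: t1_def field_simps)
    thus ?thesis using p0 p1 by (simp add: algebra_simps)
  qed
  hence pt1: "\<phi> t1 < 0" using ple[of t1] t1 by auto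
  have cH: "continuous_on {0..t1} (\<lambda>t. Hent (th t))"
  proof -
    have "continuous_on {0..t1} (\<lambda>t. - (\<Sum>i\<in>UNIV. \<Sum>j\<in>UNIV.
        xlog ((1-t) * ts$i$j + t * x$i$j) ((1-t) * tbar ts $ i + t * tbar x $ i)))"
    proof (intro continuous_on_minus continuous_on_sum cont_xlog continuous_intros)
      fix i j
      show "(\<forall>t\<in>{0..t1}. 0 < (1-t) * ts$i$j + t * x$i$j \<and> 0 < (1-t) * tbar ts $ i + t * tbar x $ i)
          \<or> (\<forall>t\<in>{0..t1}. (1-t) * ts$i$j + t * x$i$j = 0)"
      proof (cases "P$i$j > 0")
        case True
        have "0 < (1-t) * ts$i$j + t * x$i$j \<and> 0 < (1-t) * tbar ts $ i + t * tbar x $ i"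
          if "t \<in> {0..t1}" for t
        proof -
          have a: "0 < (1-t) * ts$i$j" using that t1 True pos by (simp add: ts_def tstar_def)
          have b: "0 < (1-t) * tbar ts $ i" using that t1 pos by (simp add: ts(3))
          have c: "0 \<le> t * x$i$j" "0 \<le> t * tbar x $ i" using that Delta_facts[OF x] by auto
          show ?thesis using a b c by linarith
        qed
        thus ?thesis by blast
      next
        case False
        hence "P$i$j = 0" using Pn[of i j] by linarith
        hence "ts$i$j = 0" "x$i$j = 0" using Delta_facts(4)[OF x, of i j] by (auto simp: ts_def tstar_def)
        thus ?thesis by simp
      qed
    qed
    moreover have "Hent (th t) = - (\<Sum>i\<in>UNIV. \<Sum>j\<in>UNIV.
        xlog ((1-t) * ts$i$j + t * x$i$j) ((1-t) * tbar ts $ i + t * tbar x $ i))" for t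
      by (simp add: Hent_def th_def tbar_comb)
    ultimately show ?thesis by simp
  qed
  have cphi: "continuous_on {0..t1} \<phi>"
  proof -
    have "continuous_on {0..t1} (\<lambda>t. ((1-t) * Rfun \<beta> ts + t * Rfun \<beta> x) - Hent (th t))"
      by (intro continuous_intros cH)
    moreover have "\<phi> t = ((1-t) * Rfun \<beta> ts + t * Rfun \<beta> x) - Hent (th t)" for t
    proof -
      have "Rfun \<beta> (th t) = (1-t) * Rfun \<beta> ts + t * Rfun \<beta> x" by (simp add: th_def Rfun_comb)
      thus ?thesis by (simp add: \<phi>_def)
    qed
    ultimately show ?thesis by simp
  qed
  obtain t where t: "0 \<le> t" "t \<le> t1" "\<phi> t = 0"
    using IVT2'[of \<phi> t1 0 0] pt1 p0 t1 cphi by auto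
  have tD: "th t \<in> Delta P" using t t1 by (intro thD) auto
  have "obj P \<beta> (th t) = KL (th t) P"
    using t(3) by (simp add: obj_eq[OF tD] \<phi>_def)
  also have "\<dots> \<le> (1-t) * KL ts P + t * KL x P"
    unfolding th_def using t t1 by (intro KL_convex[OF ts(1) x]) auto
  also have "\<dots> = t * KL x P" using ts(2) by simp
  also have "\<dots> \<le> KL x P" using KL_nonneg[OF P x] t t1
    by (simp add: mult_left_le_one_le)
  finally show ?thesis using tD by blast
qed




lemma pa: "(t::real) > 0 \<Longrightarrow> t*(b - x/t)\<^sup>2/2 = t/2*b\<^sup>2 - 2*(t/2*b*(x/t)) + t/2*(x/t)\<^sup>2"
  by (simp add: power2_eq_square field_simps)
lemma pb: "(t::real) > 0 \<Longrightarrow> (c*t*b)\<^sup>2/(2*t) = c\<^sup>2*(t/2*b\<^sup>2)"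
  by (simp add: power2_eq_square field_simps)
lemma pc: "(t::real) > 0 \<Longrightarrow> t*(b - c*t*b/t)\<^sup>2/2 = (1-c)\<^sup>2*(t/2*b\<^sup>2)"
  by (simp add: power2_eq_square field_simps)
lemma pd: "(t::real) > 0 \<Longrightarrow> t/2*(x/t)\<^sup>2 = x\<^sup>2/(2*t)"
  by (simp add: power2_eq_square field_simps)

definition Qf :: "real^'n::finite^'n \<Rightarrow> real^'n \<Rightarrow> real^'n \<Rightarrow> real" where
  "Qf \<theta> \<xi> \<beta> = (\<Sum>i\<in>{i. tbar \<theta> $ i > 0}. tbar \<theta> $ i * (\<beta>$i - \<xi>$i / tbar \<theta> $ i)\<^sup>2 / 2)"

lemma R_K:
  assumes x: "x \<in> Delta P"
  shows "Rfun \<beta> x = (\<Sum>i\<in>{i. tbar x $ i > 0}. tbar x $ i / 2 * (\<beta>$i)\<^sup>2)"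
  unfolding Rfun_def sum_filter_if
proof (rule sum.cong)
  fix i
  show "tbar x $ i * (\<beta> $ i)\<^sup>2 / 2 = (if 0 < tbar x $ i then tbar x $ i / 2 * (\<beta> $ i)\<^sup>2 else 0)"
    using Delta_facts(3)[OF x, of i] by auto
qed simp

lemma sqw: "(w::real) \<ge> 0 \<Longrightarrow> w * x * y = (sqrt w * x) * (sqrt w * y)"
proof -
  assume w: "w \<ge> 0"
  have "(sqrt w * x) * (sqrt w * y) = (sqrt w)\<^sup>2 * x * y" by (simp add: power2_eq_square mult_ac)
  thus ?thesis using w by simp
qed

lemma wCS:
  fixes w x y :: "'a \<Rightarrow> real"
  assumes "\<And>i. i \<in> I \<Longrightarrow> w i \<ge> 0"
  shows "(\<Sum>i\<in>I. w i * x i * y i)\<^sup>2 \<le> (\<Sum>i\<in>I. w i * (x i)\<^sup>2) * (\<Sum>i\<in>I. w i * (y i)\<^sup>2)"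
proof -
  have 1: "(\<Sum>i\<in>I. w i * x i * y i) = (\<Sum>i\<in>I. (sqrt (w i) * x i) * (sqrt (w i) * y i))"
    using assms by (intro sum.cong refl sqw) auto
  have 2: "(\<Sum>i\<in>I. w i * (x i)\<^sup>2) = (\<Sum>i\<in>I. (sqrt (w i) * x i)\<^sup>2)"
    using assms by (intro sum.cong) (auto simp: power_mult_distrib)
  have 3: "(\<Sum>i\<in>I. w i * (y i)\<^sup>2) = (\<Sum>i\<in>I. (sqrt (w i) * y i)\<^sup>2)"
    using assms by (intro sum.cong) (auto simp: power_mult_distrib)
  show ?thesis unfolding 1 2 3 by (rule Cauchy_Schwarz_ineq_sum)
qed

lemma Jfun_fin:
  assumes "Jfun x \<xi> \<le> ereal (Hent x)"
  shows "\<forall>i. tbar x $ i = 0 \<longrightarrow> \<xi>$i = 0"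
    "(\<Sum>i\<in>{i. tbar x $ i > 0}. (\<xi>$i)\<^sup>2 / (2 * tbar x $ i)) \<le> Hent x"
  using assms by (auto simp: Jfun_def split: if_splits)

lemma Q_nonneg: "x \<in> Delta P \<Longrightarrow> Qf x \<xi> \<beta> \<ge> 0"
  unfolding Qf_def by (intro sum_nonneg) auto

lemma Q_bound:
  assumes x: "x \<in> Delta P" and J: "Jfun x \<xi> \<le> ereal (Hent x)" and RH: "Hent x \<le> Rfun \<beta> x"
  shows "(sqrt (Rfun \<beta> x) - sqrt (Hent x))\<^sup>2 \<le> Qf x \<xi> \<beta>"
proof -
  define K where "K = {i. tbar x $ i > 0}"
  define w where "w i = tbar x $ i / 2" for i
  define y where "y i = \<xi>$i / tbar x $ i" for i
  define R where "R = Rfun \<beta> x"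
  define Jv where "Jv = (\<Sum>i\<in>K. w i * (y i)\<^sup>2)"
  define C where "C = (\<Sum>i\<in>K. w i * (\<beta>$i) * y i)"
  have w0: "\<And>i. i \<in> K \<Longrightarrow> w i \<ge> 0" by (auto simp: K_def w_def)
  have R: "R = (\<Sum>i\<in>K. w i * (\<beta>$i)\<^sup>2)" unfolding R_def R_K[OF x] K_def w_def by simp
  have "Jv = (\<Sum>i\<in>K. (\<xi>$i)\<^sup>2 / (2 * tbar x $ i))"
    unfolding Jv_def by (intro sum.cong refl) (unfold w_def y_def K_def mem_Collect_eq, erule pd)
  hence JH: "Jv \<le> Hent x" using Jfun_fin(2)[OF J] by (simp add: K_def)
  have J0: "Jv \<ge> 0" unfolding Jv_def using w0 by (intro sum_nonneg) auto
  have R0: "R \<ge> 0" using Rfun_nonneg[OF x] by (simp add: R_def)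
  have Q: "Qf x \<xi> \<beta> = R - 2 * C + Jv"
  proof -
    have "Qf x \<xi> \<beta> = (\<Sum>i\<in>K. w i * (\<beta>$i)\<^sup>2 - 2 * (w i * (\<beta>$i) * y i) + w i * (y i)\<^sup>2)"
      unfolding Qf_def K_def[symmetric]
      by (intro sum.cong refl) (unfold w_def y_def K_def mem_Collect_eq, erule pa)
    thus ?thesis unfolding R Jv_def C_def by (simp add: sum.distrib sum_subtractf sum_distrib_left)
  qed
  have "C\<^sup>2 \<le> R * Jv" unfolding C_def R Jv_def by (rule wCS) (rule w0)
  hence "sqrt (C\<^sup>2) \<le> sqrt (R * Jv)" by (rule real_sqrt_le_mono)
  hence C: "C \<le> sqrt R * sqrt Jv" by (simp add: real_sqrt_mult)
  have "(sqrt R - sqrt Jv)\<^sup>2 = R - 2 * (sqrt R * sqrt Jv) + Jv"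
    using R0 J0 by (simp add: power2_eq_square algebra_simps)
  hence 1: "(sqrt R - sqrt Jv)\<^sup>2 \<le> Qf x \<xi> \<beta>" using Q C by linarith
  have a: "sqrt Jv \<le> sqrt (Hent x)" using JH by (rule real_sqrt_le_mono)
  have b: "sqrt (Hent x) \<le> sqrt R" using RH by (simp add: R_def)
  have "(sqrt R - sqrt (Hent x))\<^sup>2 \<le> (sqrt R - sqrt Jv)\<^sup>2"
    using a b by (intro power_mono) auto
  thus ?thesis using 1 by (simp add: R_def)
qed

lemma exists_xi:
  fixes P :: "real^'n::finite^'n"
  assumes x: "x \<in> Delta P"
  shows "\<exists>\<xi>. Jfun x \<xi> \<le> ereal (Hent x) \<and> KL x P + Qf x \<xi> \<beta> \<le> obj P \<beta> x"
proof -
  define R where "R = Rfun \<beta> x"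
  define H where "H = Hent x"
  define K where "K = {i. tbar x $ i > 0}"
  define c where "c = (if R \<le> H then 1 else sqrt H / sqrt R)"
  define \<xi> where "\<xi> = (\<chi> i. c * tbar x $ i * \<beta>$i)"
  have R0: "R \<ge> 0" using Rfun_nonneg[OF x] by (simp add: R_def)
  have H0: "H \<ge> 0" using Hent_nonneg[OF x] by (simp add: H_def)
  have RK: "R = (\<Sum>i\<in>K. tbar x $ i / 2 * (\<beta>$i)\<^sup>2)" unfolding R_def K_def by (rule R_K[OF x])
  have Jeq: "(\<Sum>i\<in>K. (\<xi>$i)\<^sup>2 / (2 * tbar x $ i)) = c\<^sup>2 * R"
    unfolding RK sum_distrib_left
    by (intro sum.cong refl) (unfold \<xi>_def vec_lambda_beta K_def mem_Collect_eq, erule pb)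
  have Qeq: "Qf x \<xi> \<beta> = (1 - c)\<^sup>2 * R"
    unfolding RK sum_distrib_left Qf_def K_def[symmetric]
    by (intro sum.cong refl) (unfold \<xi>_def vec_lambda_beta K_def mem_Collect_eq, erule pc)
  have cond: "\<forall>i. tbar x $ i = 0 \<longrightarrow> \<xi>$i = 0" by (simp add: \<xi>_def)
  have "Jfun x \<xi> = ereal (\<Sum>i\<in>K. (\<xi>$i)\<^sup>2 / (2 * tbar x $ i))"
    unfolding Jfun_def K_def by (rule if_P) (rule cond)
  hence Jf: "Jfun x \<xi> = ereal (c\<^sup>2 * R)" by (simp only: Jeq)
  show ?thesis
  proof (cases "R \<le> H")
    case True
    hence "c = 1" by (simp add: c_def)
    hence "Jfun x \<xi> \<le> ereal (Hent x)" "Qf x \<xi> \<beta> = 0" using Jf Qeq True by (simp_all add: H_def)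
    moreover have "KL x P \<le> obj P \<beta> x" using obj_eq[OF x] by simp
    ultimately show ?thesis by auto
  next
    case False
    hence Rp: "R > 0" using H0 by linarith
    hence cc: "c = sqrt H / sqrt R" using False by (simp add: c_def)
    have "c\<^sup>2 * R = H" using Rp H0 by (simp add: cc power_divide)
    hence "Jfun x \<xi> \<le> ereal (Hent x)" using Jf by (simp add: H_def)
    moreover have "(1 - c)\<^sup>2 * R = (sqrt R - sqrt H)\<^sup>2"
    proof -
      have "(1 - c)\<^sup>2 * R = ((1 - c) * sqrt R)\<^sup>2" using R0 by (simp add: power_mult_distrib)
      also have "(1 - c) * sqrt R = sqrt R - sqrt H" using Rp by (simp add: cc algebra_simps)
      finally show ?thesis .
    qed
    hence "KL x P + Qf x \<xi> \<beta> = obj P \<beta> x" using obj_eq[OF x] Qeq by (simp add: R_def H_def)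
    ultimately show ?thesis by auto
  qed
qed




lemma pe: "(t::real) > 0 \<Longrightarrow> (t*b)\<^sup>2/(2*t) = t*b\<^sup>2/2"
  by (simp add: power2_eq_square field_simps)

theorem lemma10:
  fixes P :: "real^'n::finite^'n" and \<pi> :: "real^'n" and \<beta> :: "real^'n"
  assumes "row_stochastic P" and "irreducible_chain P" and "aperiodic_chain P"
    and "stationary P \<pi>" and "\<forall>i. \<pi>$i > 0"
  shows "(HP P \<pi> \<ge> (\<Sum>i\<in>UNIV. \<pi>$i * (\<beta>$i)\<^sup>2 / 2) \<longrightarrow> zeta_low P \<beta> = 0)
     \<and> (HP P \<pi> < (\<Sum>i\<in>UNIV. \<pi>$i * (\<beta>$i)\<^sup>2 / 2) \<longrightarrow>
          zeta_low P \<beta> = Inf (obj P \<beta> ` Delta P))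
     \<and> convex (Delta P) \<and> convex_on (Delta P) (obj P \<beta>)"
proof -
  note P = assms(1) and st = assms(4) and pos = assms(5)
  define S where "S = {KL \<theta> P + (\<Sum>i\<in>{i. tbar \<theta> $ i > 0}.
        tbar \<theta> $ i * (\<beta>$i - \<xi>$i / tbar \<theta> $ i)\<^sup>2 / 2)
      | \<theta> \<xi>. \<theta> \<in> Delta P \<and> Jfun \<theta> \<xi> \<le> ereal (Hent \<theta>)}"
  have zS: "zeta_low P \<beta> = Inf S" unfolding zeta_low_def S_def ..
  have memS: "KL \<theta> P + Qf \<theta> \<xi> \<beta> \<in> S" if "\<theta> \<in> Delta P" "Jfun \<theta> \<xi> \<le> ereal (Hent \<theta>)" for \<theta> \<xi>
    unfolding S_def Qf_def using that by blast
  have elemS: "\<exists>\<theta> \<xi>. s = KL \<theta> P + Qf \<theta> \<xi> \<beta> \<and> \<theta> \<in> Delta P \<and> Jfun \<theta> \<xi> \<le> ereal (Hent \<theta>)"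
    if "s \<in> S" for s
    using that unfolding S_def Qf_def by blast
  have Slb: "0 \<le> s" if "s \<in> S" for s
    using elemS[OF that] KL_nonneg[OF P] Q_nonneg by (metis add_nonneg_nonneg)
  define ts where "ts = tstar P \<pi>"
  have ts: "tbar ts = \<pi>" "ts \<in> Delta P" "KL ts P = 0" "Hent ts = HP P \<pi>"
    "Rfun \<beta> ts = (\<Sum>i\<in>UNIV. \<pi>$i * (\<beta>$i)\<^sup>2 / 2)"
    using tstar_facts[OF P st] by (auto simp: ts_def)
  have Sne: "S \<noteq> {}"
  proof -
    have "Jfun ts 0 \<le> ereal (Hent ts)" using Hent_nonneg[OF ts(2)] by (simp add: Jfun_def)
    thus ?thesis using memS[OF ts(2)] by blast
  qed
  have bS: "bdd_below S" by (rule bdd_belowI[where m=0]) (rule Slb)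
  have Olb: "0 \<le> obj P \<beta> y" if "y \<in> Delta P" for y
    using obj_eq[OF that] KL_nonneg[OF P that] by (metis add_nonneg_nonneg zero_le_power2)
  have bO: "bdd_below (obj P \<beta> ` Delta P)" by (rule bdd_belowI[where m=0]) (auto intro: Olb)
  have part1: "zeta_low P \<beta> = 0" if h: "HP P \<pi> \<ge> (\<Sum>i\<in>UNIV. \<pi>$i * (\<beta>$i)\<^sup>2 / 2)"
  proof -
    define \<xi> where "\<xi> = (\<chi> i. \<pi>$i * \<beta>$i)"
    have K: "{i. tbar ts $ i > 0} = UNIV" using pos ts(1) by auto
    have "(\<Sum>i\<in>{i. tbar ts $ i > 0}. (\<xi>$i)\<^sup>2 / (2 * tbar ts $ i)) = (\<Sum>i\<in>UNIV. \<pi>$i * (\<beta>$i)\<^sup>2 / 2)"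
      unfolding K unfolding ts(1) by (intro sum.cong refl) (simp only: \<xi>_def vec_lambda_beta, rule pe, simp add: pos)
    hence J: "Jfun ts \<xi> \<le> ereal (Hent ts)" using h ts(4) pos by (simp add: Jfun_def ts(1)) (metis less_irrefl)
    have Q: "Qf ts \<xi> \<beta> = 0" unfolding Qf_def K unfolding ts(1)
      by (rule sum.neutral) (use pos in \<open>simp add: \<xi>_def less_imp_neq[symmetric]\<close>)
    have "0 \<in> S" using memS[OF ts(2) J] Q ts(3) by simp
    thus ?thesis unfolding zS using Slb by (intro cInf_eq_minimum) auto
  qed
  have part2: "zeta_low P \<beta> = Inf (obj P \<beta> ` Delta P)" if h: "HP P \<pi> < (\<Sum>i\<in>UNIV. \<pi>$i * (\<beta>$i)\<^sup>2 / 2)"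
  proof (unfold zS, rule antisym)
    show "Inf S \<le> Inf (obj P \<beta> ` Delta P)"
    proof (rule cInf_greatest)
      show "obj P \<beta> ` Delta P \<noteq> {}" using ts(2) by blast
    next
      fix o' assume "o' \<in> obj P \<beta> ` Delta P"
      then obtain \<theta> where th: "\<theta> \<in> Delta P" "o' = obj P \<beta> \<theta>" by blast
      obtain \<xi> where xi: "Jfun \<theta> \<xi> \<le> ereal (Hent \<theta>)" "KL \<theta> P + Qf \<theta> \<xi> \<beta> \<le> obj P \<beta> \<theta>"
        using exists_xi[OF th(1)] by blast
      have "Inf S \<le> KL \<theta> P + Qf \<theta> \<xi> \<beta>" using memS[OF th(1) xi(1)] bS by (rule cInf_lower)
      thus "Inf S \<le> o'" using xi(2) th(2) by linarith
    qed
  next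
    show "Inf (obj P \<beta> ` Delta P) \<le> Inf S"
    proof (rule cInf_greatest[OF Sne])
      fix s assume "s \<in> S"
      then obtain \<theta> \<xi> where s: "s = KL \<theta> P + Qf \<theta> \<xi> \<beta>" "\<theta> \<in> Delta P" "Jfun \<theta> \<xi> \<le> ereal (Hent \<theta>)"
        using elemS by blast
      have "\<exists>y\<in>Delta P. obj P \<beta> y \<le> s"
      proof (cases "Hent \<theta> \<le> Rfun \<beta> \<theta>")
        case True
        have "obj P \<beta> \<theta> \<le> s" using Q_bound[OF s(2,3) True] obj_eq[OF s(2)] s(1) by simp
        thus ?thesis using s(2) by blast
      next
        case False
        then obtain y where "y \<in> Delta P" "obj P \<beta> y \<le> KL \<theta> P"
          using segment[OF P st pos h s(2)] by force
        moreover have "KL \<theta> P \<le> s" using s(1) Q_nonneg[OF s(2)] by simp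
        ultimately show ?thesis by force
      qed
      then obtain y where y: "y \<in> Delta P" "obj P \<beta> y \<le> s" by blast
      have "Inf (obj P \<beta> ` Delta P) \<le> obj P \<beta> y" using y(1) bO by (intro cInf_lower) auto
      thus "Inf (obj P \<beta> ` Delta P) \<le> s" using y(2) by linarith
    qed
  qed
  show ?thesis using part1 part2 convex_Delta obj_convex by auto
qed


end
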